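(* Let $p>2$, let $\mathcal G$ be a regular single-knot metric graph of length $\ell$ with $H$ half-lines, $P$ pendants, $L$ loops ($P+L\ge1$), and let $u$ be a positive core-symmetric bound-state. Then there exists $y>0$ such that: 1. for each half-line $h$, either $u_h(x)=\varphi(x+y)$ for all $x\ge0$ or $u_h(x)=\varphi(x-y)$ for all $x\ge0$; 2. letting $H^+$ ($H^-$) be the number of half-lines with the first (second) alternative, $\theta=\frac{H^+-H^-}{P+2L}$, and $z=\varphi(y)\in\big(0,(p/2)^{1/(p-2)}\big)$, every compact edge $\kappa$ satisfies \[ -u_\kappa''+u_\kappa=u_\kappa^{p-1}\text{ in }[0,\ell],\quad u_\kappa(0)=z,\quad u_\kappa'(0)=\theta\sqrt{2f(z)},\quad u_\kappa'(\ell)=0, \] and in particular $-\frac12(u_\kappa')^2+f(u_\kappa)\equiv(1-\theta^2)f(z)$ on $[0,\ell]$.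
   Context: A single-knot metric graph consists of $H\ge1$ half-lines, $P\ge0$ pendants and $L\ge0$ loops attached at a common vertex $\mathbf 0$; regular of length $\ell$: pendants of length $\ell$, loops of length $2\ell$. Convention: a dummy vertex at the midpoint of each loop, so all compact edges have length $\ell$, identified with $[0,\ell]$ with $\mathbf 0$ at $x=0$; half-lines identified with $[0,\infty)$, $\mathbf 0$ at $x=0$. A bound-state is a nontrivial $u\in H^1(\mathcal G)$ solving $-u''+u=|u|^{p-2}u$ on each edge with Neumann–Kirchhoff conditions (sum of inward derivatives at each vertex vanishes). Core-symmetric: restrictions to all compact edges coincide. $f(x)=\frac12x^2-\frac1p|x|^p$, and $\varphi(x)=(p/2)^{1/(p-2)}\operatorname{sech}^{2/(p-2)}\big(\frac{p-2}{2}x\big)$. *)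

theory Defs
  imports "HOL-Analysis.Analysis"
begin

definition fpot :: "real \<Rightarrow> real \<Rightarrow> real" where
  "fpot p x = x\<^sup>2 / 2 - \<bar>x\<bar> powr p / p"

definition phi :: "real \<Rightarrow> real \<Rightarrow> real" where
  "phi p x = (p / 2) powr (1 / (p - 2)) * (1 / cosh ((p - 2) / 2 * x)) powr (2 / (p - 2))"

text \<open>Compact edges (all identified with [0,l], knot at 0) are indexed by j < P + 2L:
  j < P are pendants; P+2k and P+2k+1 are the two halves of loop k (dummy vertex at x = l).\<close>
definition bound_state ::
  "real \<Rightarrow> real \<Rightarrow> nat \<Rightarrow> nat \<Rightarrow> nat \<Rightarrow>
   (nat \<Rightarrow> real \<Rightarrow> real) \<Rightarrow> (nat \<Rightarrow> real \<Rightarrow> real) \<Rightarrow>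
   (nat \<Rightarrow> real \<Rightarrow> real) \<Rightarrow> (nat \<Rightarrow> real \<Rightarrow> real) \<Rightarrow> bool" where
  "bound_state p l H P L uh duh uc duc \<longleftrightarrow>
     \<comment> \<open>equation and regularity on half-lines\<close>
     (\<forall>i<H. \<forall>x\<ge>0.
        (uh i has_real_derivative duh i x) (at x within {0..}) \<and>
        (duh i has_real_derivative (uh i x - \<bar>uh i x\<bar> powr (p - 2) * uh i x)) (at x within {0..})) \<and>
     \<comment> \<open>H^1 on half-lines\<close>
     (\<forall>i<H. (\<lambda>x. (uh i x)\<^sup>2) integrable_on {0..} \<and> (\<lambda>x. (duh i x)\<^sup>2) integrable_on {0..}) \<and>
     \<comment> \<open>equation on compact edges\<close>
     (\<forall>j<P + 2 * L. \<forall>x\<in>{0..l}.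
        (uc j has_real_derivative duc j x) (at x within {0..l}) \<and>
        (duc j has_real_derivative (uc j x - \<bar>uc j x\<bar> powr (p - 2) * uc j x)) (at x within {0..l})) \<and>
     \<comment> \<open>continuity at the knot\<close>
     (\<forall>i<H. \<forall>j<P + 2 * L. uh i 0 = uc j 0) \<and>
     (\<forall>i<H. \<forall>i'<H. uh i 0 = uh i' 0) \<and>
     (\<forall>j<P + 2 * L. \<forall>j'<P + 2 * L. uc j 0 = uc j' 0) \<and>
     \<comment> \<open>Kirchhoff at the knot (inward derivatives are d/dx at x = 0)\<close>
     (\<Sum>i<H. duh i 0) + (\<Sum>j<P + 2 * L. duc j 0) = 0 \<and>
     \<comment> \<open>Kirchhoff (Neumann) at pendant endpoints\<close>
     (\<forall>j<P. duc j l = 0) \<and>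
     \<comment> \<open>continuity and Kirchhoff at loop midpoints (inward derivative is -d/dx at x = l)\<close>
     (\<forall>k<L. uc (P + 2 * k) l = uc (P + 2 * k + 1) l \<and>
             - duc (P + 2 * k) l - duc (P + 2 * k + 1) l = 0) \<and>
     \<comment> \<open>nontrivial\<close>
     ((\<exists>i<H. \<exists>x\<ge>0. uh i x \<noteq> 0) \<or> (\<exists>j<P + 2 * L. \<exists>x\<in>{0..l}. uc j x \<noteq> 0))"

definition positive_state ::
  "real \<Rightarrow> nat \<Rightarrow> nat \<Rightarrow> nat \<Rightarrow> (nat \<Rightarrow> real \<Rightarrow> real) \<Rightarrow> (nat \<Rightarrow> real \<Rightarrow> real) \<Rightarrow> bool" where
  "positive_state l H P L uh uc \<longleftrightarrow>
     (\<forall>i<H. \<forall>x\<ge>0. uh i x > 0) \<and> (\<forall>j<P + 2 * L. \<forall>x\<in>{0..l}. uc j x > 0)"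

definition core_symmetric ::
  "real \<Rightarrow> nat \<Rightarrow> nat \<Rightarrow> (nat \<Rightarrow> real \<Rightarrow> real) \<Rightarrow> bool" where
  "core_symmetric l P L uc \<longleftrightarrow>
     (\<forall>j<P + 2 * L. \<forall>j'<P + 2 * L. \<forall>x\<in>{0..l}. uc j x = uc j' x)"

end

theory Submission
  imports Defs
begin

lemma phi_alt:
  assumes "p > 2"
  shows "phi p x = exp (ln (p/2) / (p-2) - 2/(p-2) * ln (cosh ((p-2)/2*x)))"
proof -
  have c: "cosh ((p-2)/2*x) > 0" by simp
  have "phi p x = exp (1/(p-2) * ln (p/2)) * exp (2/(p-2) * ln (1 / cosh ((p-2)/2*x)))"
    unfolding phi_def powr_def using assms c by auto
  also have "\<dots> = exp (ln (p/2) / (p-2) - 2/(p-2) * ln (cosh ((p-2)/2*x)))"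
    using c by (simp add: ln_div exp_diff exp_minus field_simps)
  finally show ?thesis .
qed

lemma phi_pos: "p > 2 \<Longrightarrow> phi p x > 0"
  by (simp add: phi_alt)

definition dphi :: "real \<Rightarrow> real \<Rightarrow> real" where
  "dphi p x = - phi p x * tanh ((p-2)/2*x)"

lemma phi_deriv:
  assumes "p > 2"
  shows "(phi p has_real_derivative dphi p x) (at x within S)"
proof -
  have c: "cosh ((p-2)/2*x) > 0" by simp
  have "((\<lambda>x. exp (ln (p/2) / (p-2) - 2/(p-2) * ln (cosh ((p-2)/2*x)))) has_real_derivative
     exp (ln (p/2) / (p-2) - 2/(p-2) * ln (cosh ((p-2)/2*x))) * (0 - 2/(p-2) * ((1 / cosh ((p-2)/2*x)) * (sinh ((p-2)/2*x) * ((p-2)/2 * 1))))) (at x within S)"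
    using c by (intro derivative_eq_intros refl) auto
  moreover have "exp (ln (p/2) / (p-2) - 2/(p-2) * ln (cosh ((p-2)/2*x))) * (0 - 2/(p-2) * ((1 / cosh ((p-2)/2*x)) * (sinh ((p-2)/2*x) * ((p-2)/2 * 1)))) = dphi p x"
    using assms c by (simp add: dphi_def phi_alt tanh_def field_simps)
  ultimately show ?thesis using assms by (simp add: phi_alt[OF assms, abs_def])
qed

lemma exp2ln: "C > 0 \<Longrightarrow> exp (2 * ln C) = (C::real)^2"
proof -
  assume "C > 0"
  then have "ln (C^2) = 2 * ln C" using ln_realpow[of C 2] by simp
  then show ?thesis using \<open>C > 0\<close> by (metis exp_ln zero_less_power)
qed

lemma phi_pow:
  assumes "p > 2"
  shows "phi p x powr (p-2) = (p/2) / (cosh ((p-2)/2*x))^2"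
proof -
  have c: "cosh ((p-2)/2*x) > 0" by simp
  have "phi p x powr (p-2) = exp ((p-2) * (ln (p/2) / (p-2) - 2/(p-2) * ln (cosh ((p-2)/2*x))))"
    using phi_pos[OF assms, of x] by (simp add: powr_def phi_alt[OF assms])
  also have "\<dots> = exp (ln (p/2) - 2 * ln (cosh ((p-2)/2*x)))"
    using assms by (simp add: right_diff_distrib)
  also have "\<dots> = (p/2) / exp (2 * ln (cosh ((p-2)/2*x)))"
    using assms by (simp add: exp_diff)
  also have "exp (2 * ln (cosh ((p-2)/2*x))) = (cosh ((p-2)/2*x))^2"
    using c exp2ln by blast
  finally show ?thesis .
qed

lemma tanh_sq: "tanh (t::real) ^ 2 = 1 - 1 / cosh t ^ 2"
proof -
  have a: "cosh t ^ 2 = 1 + sinh t ^ 2" by (simp add: cosh_square_eq)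
  have "cosh t > 0" by simp
  then have b: "cosh t ^ 2 > 0" by simp
  have "tanh t ^ 2 = sinh t ^ 2 / cosh t ^ 2" by (simp add: tanh_def power_divide)
  also have "\<dots> = (cosh t ^ 2 - 1) / cosh t ^ 2" using a by simp
  also have "\<dots> = 1 - 1 / cosh t ^ 2" using b by (simp add: diff_divide_distrib)
  finally show ?thesis .
qed

lemma phi_powm1:
  assumes "p > 2"
  shows "phi p x powr (p-1) = phi p x * ((p/2) / (cosh ((p-2)/2*x))^2)"
proof -
  have "phi p x powr (p-1) = phi p x powr (1 + (p-2))" by simp
  also have "\<dots> = phi p x * phi p x powr (p-2)"
    using phi_pos[OF assms, of x] by (simp only: powr_add powr_one)
  finally show ?thesis using phi_pow[OF assms] by simp
qed

lemma alg: "T^2 = 1 - 1/C^2 \<Longrightarrow> C > 0 \<Longrightarrow> - (- F * T * T + F * ((1 - T^2) * ((p-2)/2*1))) = F - F * ((p/2) / C^2)"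
  for T C F p :: real
proof -
  assume h: "T^2 = 1 - 1/C^2" and c: "C > 0"
  have "- (- F * T * T + F * ((1 - T^2) * ((p-2)/2*1))) = F*(T^2) - F*(1-T^2)*(p-2)/2"
    by (simp add: algebra_simps power2_eq_square)
  also have "\<dots> = F*(1-1/C^2) - F*(1/C^2)*(p-2)/2" using h by simp
  also have "\<dots> = F - F * ((p/2) / C^2)" using c by (simp add: field_simps)
  finally show ?thesis .
qed

lemma dphi_deriv:
  assumes "p > 2"
  shows "(dphi p has_real_derivative (phi p x - phi p x powr (p-1))) (at x within S)"
proof -
  have c: "cosh ((p-2)/2*x) > 0" by simp
  have d1: "(phi p has_real_derivative dphi p x) (at x within S)" by (rule phi_deriv[OF assms])
  have d2: "((\<lambda>x. tanh ((p-2)/2*x)) has_real_derivative (1 - tanh ((p-2)/2*x)^2) * ((p-2)/2)) (at x within S)"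
    using c by (auto intro!: derivative_eq_intros)
  have "((\<lambda>x. - (phi p x * tanh ((p-2)/2*x))) has_real_derivative
     - (dphi p x * tanh ((p-2)/2*x) + ((1 - tanh ((p-2)/2*x)^2) * ((p-2)/2)) * phi p x)) (at x within S)"
    by (rule DERIV_minus[OF DERIV_mult[OF d1 d2]])
  moreover have "- (dphi p x * tanh ((p-2)/2*x) + ((1 - tanh ((p-2)/2*x)^2) * ((p-2)/2)) * phi p x)
     = phi p x - phi p x powr (p-1)"
  proof -
    have "- (dphi p x * tanh ((p-2)/2*x) + ((1 - tanh ((p-2)/2*x)^2) * ((p-2)/2)) * phi p x)
      = - (- phi p x * tanh ((p-2)/2*x) * tanh ((p-2)/2*x) + phi p x * ((1 - tanh ((p-2)/2*x)^2) * ((p-2)/2*1)))"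
      by (simp add: dphi_def algebra_simps)
    also have "\<dots> = phi p x - phi p x * ((p/2) / (cosh ((p-2)/2*x))^2)"
      by (rule alg[OF tanh_sq c])
    finally show ?thesis using phi_powm1[OF assms] by simp
  qed
  ultimately show ?thesis by (simp add: dphi_def[abs_def])
qed

lemma phi_energy:
  assumes "p > 2"
  shows "fpot p (phi p x) = (1/2) * (dphi p x)^2"
proof -
  have pos: "phi p x > 0" using phi_pos[OF assms] .
  have c: "cosh ((p-2)/2*x) > 0" by simp
  have "phi p x powr p = phi p x powr (2 + (p-2))" by simp
  also have "\<dots> = (phi p x)^2 * phi p x powr (p-2)" using pos by (simp only: powr_add powr_numeral)
  finally have e: "phi p x powr p = (phi p x)^2 * ((p/2) / (cosh ((p-2)/2*x))^2)"
    using phi_pow[OF assms] by simp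
  have "fpot p (phi p x) = (phi p x)^2 / 2 - (phi p x)^2 * ((p/2) / (cosh ((p-2)/2*x))^2) / p"
    unfolding fpot_def using pos e by simp
  also have "\<dots> = (phi p x)^2 / 2 * (1 - 1 / (cosh ((p-2)/2*x))^2)"
    using assms by (simp add: field_simps)
  also have "\<dots> = (1/2) * (dphi p x)^2"
    unfolding dphi_def tanh_sq[symmetric] by (simp add: power_mult_distrib)
  finally show ?thesis .
qed

lemma lip_powr:
  fixes a b r m M :: real
  assumes "r \<ge> 1" "0 < m" "m \<le> a" "a \<le> M" "m \<le> b" "b \<le> M"
  shows "\<bar>a powr r - b powr r\<bar> \<le> r * M powr (r-1) * \<bar>a - b\<bar>"
proof -
  have main: "\<bar>y powr r - x powr r\<bar> \<le> r * M powr (r-1) * \<bar>y - x\<bar>"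
    if xy: "m \<le> x" "x < y" "y \<le> M" for x y
  proof -
    have "\<exists>z. x < z \<and> z < y \<and> (y powr r - x powr r = (y - x) * (r * z powr (r - 1)))"
      using xy assms by (intro MVT2) (auto intro!: has_real_derivative_powr)
    then obtain z where z: "x < z" "z < y" "y powr r - x powr r = (y - x) * (r * z powr (r - 1))" by blast
    have zM: "z powr (r-1) \<le> M powr (r-1)" using z xy assms by (intro powr_mono2) auto
    have "\<bar>y powr r - x powr r\<bar> = (y - x) * (r * z powr (r - 1))"
      using z xy assms by simp
    also have "\<dots> \<le> (y - x) * (r * M powr (r - 1))"
      using zM xy assms by (intro mult_left_mono) auto
    finally show ?thesis using xy by (simp add: algebra_simps)
  qed
  show ?thesis
  proof (cases a b rule: linorder_cases)
    case less then show ?thesis using main[of a b] assms by (simp add: abs_minus_commute)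
  next
    case equal then show ?thesis using assms by simp
  next
    case greater then show ?thesis using main[of b a] assms by (simp add: abs_minus_commute)
  qed
qed

lemma gron_alg:
  fixes a b c K :: real
  assumes "\<bar>c\<bar> \<le> K * \<bar>a\<bar>"
  shows "2*a*b + 2*b*c \<le> (2 + K^2) * (a^2 + b^2)"
proof -
  have "0 \<le> K * \<bar>a\<bar>" using assms by linarith
  then have c2: "c^2 \<le> (K * \<bar>a\<bar>)^2" using assms by (metis abs_ge_zero power2_abs power_mono)
  have "(K * \<bar>a\<bar>)^2 = K^2 * a^2" by (simp add: power_mult_distrib)
  with c2 have c3: "c^2 \<le> K^2 * a^2" by simp
  have s1: "0 \<le> (a-b)^2" "0 \<le> (b-c)^2" "0 \<le> K^2 * b^2" "0 \<le> a^2" by auto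
  have e1: "(a-b)^2 = a^2 - 2*a*b + b^2" "(b-c)^2 = b^2 - 2*b*c + c^2" by (simp_all add: power2_eq_square algebra_simps)
  have e2: "(2 + K^2) * (a^2 + b^2) = 2*a^2 + 2*b^2 + K^2*a^2 + K^2*b^2" by (simp add: algebra_simps)
  show ?thesis using s1 e1 e2 c3 by linarith
qed

lemma deriv_cont_on:
  assumes "\<And>x. x \<in> S \<Longrightarrow> (f has_real_derivative f' x) (at x within S)"
  shows "continuous_on S f"
  using assms DERIV_continuous continuous_on_eq_continuous_within by blast

lemma ode_unique:
  fixes u du v dv :: "real \<Rightarrow> real"
  assumes p: "p > 2" and T: "T > 0"
   and du: "\<And>x. x\<in>{0..T} \<Longrightarrow> (u has_real_derivative du x) (at x within {0..T})"
   and ddu: "\<And>x. x\<in>{0..T} \<Longrightarrow> (du has_real_derivative (u x - u x powr (p-1))) (at x within {0..T})"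
   and dv: "\<And>x. x\<in>{0..T} \<Longrightarrow> (v has_real_derivative dv x) (at x within {0..T})"
   and ddv: "\<And>x. x\<in>{0..T} \<Longrightarrow> (dv has_real_derivative (v x - v x powr (p-1))) (at x within {0..T})"
   and posu: "\<And>x. x\<in>{0..T} \<Longrightarrow> u x > 0" and posv: "\<And>x. x\<in>{0..T} \<Longrightarrow> v x > 0"
   and init: "u 0 = v 0" "du 0 = dv 0"
   and x: "x \<in> {0..T}"
  shows "u x = v x \<and> du x = dv x"
proof -
  have cu: "continuous_on {0..T} u" by (rule deriv_cont_on[OF du])
  have cv: "continuous_on {0..T} v" by (rule deriv_cont_on[OF dv])
  have cdu: "continuous_on {0..T} du" by (rule deriv_cont_on[OF ddu])
  have cdv: "continuous_on {0..T} dv" by (rule deriv_cont_on[OF ddv])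
  have ne: "{0..T} \<noteq> {}" using T by auto
  obtain x1 where x1: "x1 \<in> {0..T}" "\<And>y. y \<in> {0..T} \<Longrightarrow> min (u x1) (v x1) \<le> min (u y) (v y)"
    using continuous_attains_inf[OF compact_Icc ne continuous_on_min[OF cu cv]] by blast
  obtain x2 where x2: "x2 \<in> {0..T}" "\<And>y. y \<in> {0..T} \<Longrightarrow> max (u y) (v y) \<le> max (u x2) (v x2)"
    using continuous_attains_sup[OF compact_Icc ne continuous_on_max[OF cu cv]] by blast
  define m where "m = min (u x1) (v x1)"
  define M where "M = max (u x2) (v x2)"
  have m0: "m > 0" using posu[OF x1(1)] posv[OF x1(1)] by (simp add: m_def)
  have mM: "\<And>y. y \<in> {0..T} \<Longrightarrow> m \<le> u y \<and> u y \<le> M \<and> m \<le> v y \<and> v y \<le> M"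
    using x1 x2 unfolding m_def M_def by (metis max.bounded_iff min.bounded_iff)
  define K where "K = 1 + (p-1) * M powr (p-2)"
  have lip: "\<bar>(u y - u y powr (p-1)) - (v y - v y powr (p-1))\<bar> \<le> K * \<bar>u y - v y\<bar>"
    if y: "y \<in> {0..T}" for y
  proof -
    have "\<bar>u y powr (p-1) - v y powr (p-1)\<bar> \<le> (p-1) * M powr (p-1-1) * \<bar>u y - v y\<bar>"
      using mM[OF y] m0 p by (intro lip_powr) auto
    then have "\<bar>u y powr (p-1) - v y powr (p-1)\<bar> \<le> (p-1) * M powr (p-2) * \<bar>u y - v y\<bar>"
      by (simp add: algebra_simps)
    then show ?thesis unfolding K_def by (simp add: algebra_simps abs_triangle_ineq4)
  qed
  define C where "C = 2 + K^2"
  define W where "W = (\<lambda>x. exp (-C*x) * ((u x - v x)^2 + (du x - dv x)^2))"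
  have dW: "(W has_real_derivative
      exp (-C*t) * (-C) * ((u t - v t)^2 + (du t - dv t)^2) + exp (-C*t) * (2*(u t - v t)*(du t - dv t)
        + 2*(du t - dv t)*((u t - u t powr (p-1)) - (v t - v t powr (p-1))))) (at t within {0..T})"
    if t: "t \<in> {0..T}" for t
    unfolding W_def
    by (rule DERIV_cong, (rule du[OF t] ddu[OF t] dv[OF t] ddv[OF t] | rule derivative_eq_intros | rule refl)+) (simp add: algebra_simps)
  have dWn: "exp (-C*t) * (-C) * ((u t - v t)^2 + (du t - dv t)^2) + exp (-C*t) * (2*(u t - v t)*(du t - dv t)
        + 2*(du t - dv t)*((u t - u t powr (p-1)) - (v t - v t powr (p-1)))) \<le> 0"
    if t: "t \<in> {0..T}" for t
  proof -
    have "2*(u t - v t)*(du t - dv t) + 2*(du t - dv t)*((u t - u t powr (p-1)) - (v t - v t powr (p-1)))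
       \<le> C * ((u t - v t)^2 + (du t - dv t)^2)"
      unfolding C_def by (rule gron_alg[OF lip[OF t]])
    then have "exp (-C*t) * (2*(u t - v t)*(du t - dv t) + 2*(du t - dv t)*((u t - u t powr (p-1)) - (v t - v t powr (p-1))))
       \<le> exp (-C*t) * (C * ((u t - v t)^2 + (du t - dv t)^2))"
      by (intro mult_left_mono) auto
    then show ?thesis by (simp add: algebra_simps)
  qed
  have cW: "continuous_on {0..T} W" using deriv_cont_on[OF dW] .
  have "W 0 \<ge> W x"
  proof (rule DERIV_nonpos_imp_decreasing_open[of 0 x W])
    show "0 \<le> x" using x by auto
    show "continuous_on {0..x} W" by (rule continuous_on_subset[OF cW]) (use x in auto)
  next
    fix t assume t: "0 < t" "t < x"
    then have "at t within {0..T} = at t" using x by (intro at_within_Icc_at) auto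
    then show "\<exists>y. (W has_real_derivative y) (at t) \<and> y \<le> 0"
      using dW[of t] dWn[of t] t x by auto
  qed
  moreover have "W 0 = 0" using init by (simp add: W_def)
  ultimately have "(u x - v x)^2 + (du x - dv x)^2 \<le> 0"
    unfolding W_def by (simp add: mult_le_0_iff)
  then show ?thesis
    by (smt (verit) power2_less_eq_zero_iff zero_le_power2)
qed

lemma abs_powr_conv: "(u::real) > 0 \<Longrightarrow> \<bar>u\<bar> powr (p - 2) * u = u powr (p - 1)"
proof -
  assume u: "u > 0"
  have "u powr (p - 1) = u powr ((p - 2) + 1)" by simp
  also have "\<dots> = u powr (p-2) * u" using u by (simp only: powr_add powr_one)
  finally show ?thesis using u by simp
qed

lemma fpot_pos: "(u::real) > 0 \<Longrightarrow> fpot p u = u^2/2 - u powr p / p"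
  by (simp add: fpot_def)

lemma energy_const:
  fixes u du :: "real \<Rightarrow> real"
  assumes p: "p > 2" and S: "convex S" and x0: "x0 \<in> S"
   and du: "\<And>x. x\<in>S \<Longrightarrow> (u has_real_derivative du x) (at x within S)"
   and ddu: "\<And>x. x\<in>S \<Longrightarrow> (du has_real_derivative (u x - u x powr (p-1))) (at x within S)"
   and pos: "\<And>x. x\<in>S \<Longrightarrow> u x > 0"
   and x: "x \<in> S"
  shows "- (1/2) * (du x)^2 + fpot p (u x) = - (1/2) * (du x0)^2 + fpot p (u x0)"
proof -
  define E where "E = (\<lambda>x. - (1/2) * (du x)^2 + ((u x)^2/2 - u x powr p / p))"
  have dE: "(E has_real_derivative 0) (at t within S)" if t: "t \<in> S" for t
  proof -
    have d1: "((\<lambda>x. (du x)^2) has_real_derivative 2 * du t * (u t - u t powr (p-1))) (at t within S)"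
      using ddu[OF t] by (auto intro!: derivative_eq_intros)
    have d2: "((\<lambda>x. (u x)^2) has_real_derivative 2 * u t * du t) (at t within S)"
      using du[OF t] by (auto intro!: derivative_eq_intros)
    have d3: "((\<lambda>x. u x powr p) has_real_derivative p * u t powr (p-1) * du t) (at t within S)"
      by (rule DERIV_cong[OF DERIV_chain2[OF has_real_derivative_powr[OF pos[OF t]] du[OF t]]]) simp
    have "(E has_real_derivative
       - (1/2) * (2 * du t * (u t - u t powr (p-1))) + (2 * u t * du t / 2 - (p * u t powr (p - 1) * du t) / p)) (at t within S)"
      unfolding E_def
      by (intro DERIV_add DERIV_cmult DERIV_diff DERIV_cdivide d1 d2 d3)
    moreover have "- (1/2) * (2 * du t * (u t - u t powr (p-1))) + (2 * u t * du t / 2 - (p * u t powr (p - 1) * du t) / p) = 0"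
      using p by (simp add: algebra_simps)
    ultimately show ?thesis by (rule DERIV_cong)
  qed
  obtain c where "\<forall>x\<in>S. E x = c" using has_field_derivative_zero_constant[OF S dE] by blast
  then have "E x = E x0" using x x0 by simp
  then show ?thesis unfolding E_def using fpot_pos pos x x0 by simp
qed

lemma not_integrable_ge:
  fixes h :: "real \<Rightarrow> real"
  assumes int: "h integrable_on {0..}" and nn: "\<And>x. x \<ge> 0 \<Longrightarrow> h x \<ge> 0"
    and T: "T \<ge> 0" and c: "c > 0" and ge: "\<And>x. x \<ge> T \<Longrightarrow> h x \<ge> c"
  shows False
proof -
  define I where "I = integral {0..} h"
  define r where "r = \<bar>I\<bar> / c + 1"
  have cr: "c * r = \<bar>I\<bar> + c" using c unfolding r_def by (simp add: field_simps)
  have "\<bar>I\<bar> / c \<ge> 0" using c by simp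
  then have r0: "r > 0" unfolding r_def by linarith
  have r: "r > 0" "c * r > I" using r0 cr abs_ge_self[of I] c by linarith+
  have sub: "{T..T+r} \<subseteq> {0..}" using T by auto
  have ih: "h integrable_on {T..T+r}" by (rule integrable_on_subinterval[OF int sub])
  have "integral {T..T+r} (\<lambda>x. c) \<le> integral {T..T+r} h"
    using ih ge by (intro integral_le) auto
  moreover have "integral {T..T+r} (\<lambda>x. c) = r * c" using r by simp
  moreover have "integral {T..T+r} h \<le> integral {0..} h"
    using sub ih int nn by (intro integral_subset_le) auto
  ultimately show False using r unfolding I_def by (simp add: algebra_simps)
qed

lemma tendsto_pos_not_integrable:
  fixes h :: "real \<Rightarrow> real"
  assumes int: "h integrable_on {0..}" and nn: "\<And>x. x \<ge> 0 \<Longrightarrow> h x \<ge> 0"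
    and lim: "(h \<longlongrightarrow> L) at_top" and L: "L > 0"
  shows False
proof -
  have "eventually (\<lambda>x. h x > L/2) at_top" using order_tendstoD(1)[OF lim, of "L/2"] L by simp
  then obtain T where T: "\<And>x. x \<ge> T \<Longrightarrow> h x > L/2" by (auto simp: eventually_at_top_linorder)
  show False
    using not_integrable_ge[OF int nn, of "max T 0" "L/2"] T L by (simp add: less_imp_le)
qed

lemma halfline_energy_zero:
  fixes u du :: "real \<Rightarrow> real"
  assumes p: "p > 2"
   and du: "\<And>x. x \<in> {0..} \<Longrightarrow> (u has_real_derivative du x) (at x within {0..})"
   and ddu: "\<And>x. x \<in> {0..} \<Longrightarrow> (du has_real_derivative (u x - u x powr (p-1))) (at x within {0..})"
   and pos: "\<And>x. x \<in> {0..} \<Longrightarrow> u x > 0"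
   and i1: "(\<lambda>x. (u x)^2) integrable_on {0..}"
   and i2: "(\<lambda>x. (du x)^2) integrable_on {0..}"
  shows "- (1/2) * (du 0)^2 + fpot p (u 0) = 0"
proof -
  define E0 where "E0 = - (1/2) * (du 0)^2 + fpot p (u 0)"
  have En: "(du x)^2 = (u x)^2 - 2 * u x powr p / p - 2 * E0" if x: "x \<in> {0..}" for x
  proof -
    have "- (1/2) * (du x)^2 + fpot p (u x) = E0"
      unfolding E0_def by (rule energy_const[OF p convex_real_interval(1) _ du ddu pos x]) auto
    then show ?thesis using fpot_pos[OF pos[OF x], of p] by (simp add: algebra_simps)
  qed
  define F' where "F' = (\<lambda>x. 2 * u x * du x)"
  have cu: "continuous_on {0..} u" by (rule deriv_cont_on[OF du])
  have cdu: "continuous_on {0..} du" by (rule deriv_cont_on[OF ddu])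
  have S: "{0::real..} \<in> sets lebesgue" by simp
  have absF: "F' absolutely_integrable_on {0..}"
  proof (rule measurable_bounded_by_integrable_imp_absolutely_integrable[OF _ S integrable_add[OF i1 i2]])
    show "F' \<in> borel_measurable (lebesgue_on {0..})"
      unfolding F'_def by (intro continuous_imp_measurable_on_sets_lebesgue S continuous_intros cu cdu)
    fix x :: real
    have "0 \<le> (\<bar>u x\<bar> - \<bar>du x\<bar>)^2" by simp
    then show "norm (F' x) \<le> (u x)^2 + (du x)^2"
      unfolding F'_def by (simp add: power2_eq_square algebra_simps abs_mult)
  qed
  have ftc: "integral {0..b} F' = (u b)^2 - (u 0)^2" if b: "b \<ge> 0" for b
  proof -
    have "(F' has_integral ((u b)^2 - (u 0)^2)) {0..b}"
    proof (rule fundamental_theorem_of_calculus[OF b])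
      fix x assume x: "x \<in> {0..b}"
      have "(u has_real_derivative du x) (at x within {0..b})"
        using du[of x] x by (auto intro: DERIV_subset)
      then have "((\<lambda>x. (u x)^2) has_real_derivative F' x) (at x within {0..b})"
        unfolding F'_def by (auto intro!: derivative_eq_intros)
      then show "((\<lambda>x. (u x)^2) has_vector_derivative F' x) (at x within {0..b})"
        by (simp add: has_real_derivative_iff_has_vector_derivative)
    qed
    then show ?thesis by (rule integral_unique)
  qed
  define J where "J = (LINT x:{0..}|lebesgue. F' x)"
  have lim1: "((\<lambda>b. LINT x:{0..b}|lebesgue. F' x) \<longlongrightarrow> J) at_top"
    unfolding J_def by (rule tendsto_set_lebesgue_integral_at_top[OF _ absF]) simp
  have ev1: "eventually (\<lambda>b. (LINT x:{0..b}|lebesgue. F' x) = (u b)^2 - (u 0)^2) at_top"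
    using eventually_ge_at_top[of "0::real"]
  proof (rule eventually_mono)
    fix b :: real assume b: "b \<ge> 0"
    have si: "set_integrable lebesgue {0..b} F'"
      by (rule set_integrable_subset[OF absF]) auto
    show "(LINT x:{0..b}|lebesgue. F' x) = (u b)^2 - (u 0)^2"
      using set_lebesgue_integral_eq_integral(2)[OF si] ftc[OF b] by simp
  qed
  have lim2: "((\<lambda>b. (u b)^2 - (u 0)^2) \<longlongrightarrow> J) at_top"
    using Lim_transform_eventually[OF lim1 ev1] .
  have lim3: "((\<lambda>b. (u b)^2) \<longlongrightarrow> J + (u 0)^2) at_top"
    using tendsto_add[OF lim2 tendsto_const[of "(u 0)^2"]] by simp
  have L0: "J + (u 0)^2 \<ge> 0"
    by (rule tendsto_lowerbound[OF lim3]) auto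
  have L1: "J + (u 0)^2 = 0"
  proof (rule ccontr)
    assume "J + (u 0)^2 \<noteq> 0"
    then have "J + (u 0)^2 > 0" using L0 by simp
    then show False using tendsto_pos_not_integrable[OF i1 _ lim3] by simp
  qed
  have usq: "((\<lambda>b. (u b)^2) \<longlongrightarrow> 0) at_top" using lim3 L1 by simp
  have ev2: "eventually (\<lambda>b. sqrt ((u b)^2) = u b) at_top"
    using eventually_ge_at_top[of "0::real"] by (rule eventually_mono) (metis abs_of_pos atLeast_iff pos real_sqrt_abs)
  have u0: "(u \<longlongrightarrow> 0) at_top"
    using Lim_transform_eventually[OF tendsto_real_sqrt[OF usq] ev2] by simp
  have up: "((\<lambda>b. u b powr p) \<longlongrightarrow> 0) at_top"
  proof -
    have "eventually (\<lambda>x. 0 \<le> u x) at_top"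
      using eventually_ge_at_top[of "0::real"] by (rule eventually_mono) (use pos in \<open>auto intro: less_imp_le\<close>)
    then show ?thesis using tendsto_zero_powrI[OF u0 tendsto_const[of p]] p by simp
  qed
  have lim4: "((\<lambda>b. (u b)^2 - 2 * u b powr p / p - 2 * E0) \<longlongrightarrow> 0 - 2 * 0 / p - 2 * E0) at_top"
    using p by (intro tendsto_intros usq up) auto
  have ev3: "eventually (\<lambda>b. (u b)^2 - 2 * u b powr p / p - 2 * E0 = (du b)^2) at_top"
    using eventually_ge_at_top[of "0::real"] by (rule eventually_mono) (use En in auto)
  have lim5: "((\<lambda>b. (du b)^2) \<longlongrightarrow> - 2 * E0) at_top"
    using Lim_transform_eventually[OF lim4 ev3] by simp
  have "- 2 * E0 \<ge> 0" by (rule tendsto_lowerbound[OF lim5]) auto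
  moreover have "\<not> (- 2 * E0 > 0)"
    using tendsto_pos_not_integrable[OF i2 _ lim5] by auto
  ultimately have "E0 = 0" by simp
  then show ?thesis unfolding E0_def .
qed

lemma phi_0: "p > 2 \<Longrightarrow> phi p 0 = (p/2) powr (1/(p-2))"
  by (simp add: phi_def)

lemma phi_0_alt: "p > 2 \<Longrightarrow> phi p 0 = exp (ln (p/2) / (p-2))"
  by (simp add: phi_alt)

lemma phi_even: "phi p (-x) = phi p x"
  by (simp add: phi_def)

lemma phi_lt0:
  assumes p: "p > 2" and x: "x \<noteq> 0"
  shows "phi p x < phi p 0"
proof -
  have "cosh ((p-2)/2*x) \<noteq> 1" using p x by simp
  then have "cosh ((p-2)/2*x) > 1" using cosh_real_ge_1[of "(p-2)/2*x"] by linarith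
  then have "ln (cosh ((p-2)/2*x)) > 0" by simp
  then have "2/(p-2) * ln (cosh ((p-2)/2*x)) > 0" using p by simp
  then show ?thesis unfolding phi_alt[OF p] using p by simp
qed

lemma dphi_neg: "p > 2 \<Longrightarrow> y > 0 \<Longrightarrow> dphi p y < 0"
  unfolding dphi_def using phi_pos[of p y] by (simp add: mult_pos_pos)

lemma dphi_odd: "dphi p (-y) = - dphi p y"
  unfolding dphi_def phi_even by simp

lemma dphi_0: "dphi p 0 = 0"
  unfolding dphi_def by simp

lemma fpot_le_max:
  assumes p: "p > 2" and z: "z > 0" and f: "fpot p z \<ge> 0"
  shows "z \<le> phi p 0"
proof -
  have "z powr p = z powr (2 + (p-2))" by simp
  also have "\<dots> = z^2 * z powr (p-2)" using z by (simp only: powr_add powr_numeral)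
  finally have e: "z powr p = z^2 * z powr (p-2)" .
  have "z^2/2 - z^2 * z powr (p-2) / p \<ge> 0" using f e z unfolding fpot_def by simp
  then have "z^2 * (p/2 - z powr (p-2)) \<ge> 0" using p by (simp add: field_simps)
  then have zz: "z powr (p-2) \<le> p/2" using z by (simp add: zero_le_mult_iff)
  have "z = (z powr (p-2)) powr (1/(p-2))" using z p by (simp add: powr_powr)
  also have "\<dots> \<le> (p/2) powr (1/(p-2))" using zz p by (intro powr_mono2) auto
  finally show ?thesis using phi_0[OF p] by simp
qed

lemma phi_surj:
  assumes p: "p > 2" and z: "z > 0" "z < phi p 0"
  shows "\<exists>y>0. phi p y = z"
proof -
  define a where "a = ln (p/2) / (p-2)"
  have "ln z < a" using z phi_0_alt[OF p] unfolding a_def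
    by (metis exp_less_cancel_iff exp_ln)
  define c where "c = exp ((p-2)/2 * (a - ln z))"
  have c1: "c > 1" unfolding c_def using p \<open>ln z < a\<close> by simp
  define y where "y = arcosh c / ((p-2)/2)"
  have ypos: "y > 0" unfolding y_def using c1 p by simp
  have "cosh ((p-2)/2*y) = c" unfolding y_def using p c1 by simp
  then have "phi p y = exp (a - 2/(p-2) * ln c)" unfolding phi_alt[OF p] a_def by simp
  also have "ln c = (p-2)/2 * (a - ln z)" unfolding c_def by simp
  also have "a - 2/(p-2) * ((p-2)/2 * (a - ln z)) = ln z" using p by (simp add: field_simps)
  finally show ?thesis using ypos z by auto
qed

lemma phi_shift_deriv:
  assumes p: "p > 2"
  shows "((\<lambda>x. phi p (x + y)) has_real_derivative dphi p (x + y)) (at x within S)"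
    and "((\<lambda>x. dphi p (x + y)) has_real_derivative (phi p (x + y) - phi p (x + y) powr (p-1))) (at x within S)"
proof -
  have g: "((\<lambda>x. x + y) has_real_derivative 1) (at x within S)" by (auto intro!: derivative_eq_intros)
  show "((\<lambda>x. phi p (x + y)) has_real_derivative dphi p (x + y)) (at x within S)"
    using DERIV_chain2[where g="\<lambda>x. x + y" and x=x, OF phi_deriv[OF p, of "x+y" UNIV] g] by simp
  show "((\<lambda>x. dphi p (x + y)) has_real_derivative (phi p (x + y) - phi p (x + y) powr (p-1))) (at x within S)"
    using DERIV_chain2[where g="\<lambda>x. x + y" and x=x, OF dphi_deriv[OF p, of "x+y" UNIV] g] by simp
qed

lemma deriv_unique_Icc:
  fixes f g :: "real \<Rightarrow> real"
  assumes l: "l > 0" and x: "x \<in> {0..l}"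
    and eq: "\<And>t. t \<in> {0..l} \<Longrightarrow> f t = g t"
    and df: "(f has_real_derivative a) (at x within {0..l})"
    and dg: "(g has_real_derivative b) (at x within {0..l})"
  shows "a = b"
proof -
  have "(f has_derivative (*) b) (at x within {0..l})"
    using has_derivative_transform[OF x, of f g] eq dg unfolding has_field_derivative_def by auto
  then have "(f has_real_derivative b) (at x within {0..l})" by (simp add: has_field_derivative_def)
  moreover have "at x within {0..l} \<noteq> bot" using l x by (simp add: trivial_limit_within)
  ultimately show ?thesis using has_field_derivative_unique df by blast
qed

lemma halfline_ident:
  fixes u du :: "real \<Rightarrow> real"
  assumes p: "p > 2"
   and du: "\<And>x. x \<in> {0..} \<Longrightarrow> (u has_real_derivative du x) (at x within {0..})"
   and ddu: "\<And>x. x \<in> {0..} \<Longrightarrow> (du has_real_derivative (u x - u x powr (p-1))) (at x within {0..})"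
   and pos: "\<And>x. x \<in> {0..} \<Longrightarrow> u x > 0"
   and i0: "u 0 = phi p c" "du 0 = dphi p c"
   and x: "x \<ge> 0"
  shows "u x = phi p (x + c)"
proof -
  have T: "x + 1 > 0" using x by simp
  have sub: "{0..x+1} \<subseteq> {0..}" by auto
  have "u x = phi p (x + c) \<and> du x = dphi p (x + c)"
  proof (rule ode_unique[OF p T, where v="\<lambda>x. phi p (x + c)" and dv="\<lambda>x. dphi p (x + c)"])
    fix t assume t: "t \<in> {0..x+1}"
    then have t': "t \<in> {0..}" by simp
    show "(u has_real_derivative du t) (at t within {0..x+1})"
      by (rule DERIV_subset[OF du[OF t'] sub])
    show "(du has_real_derivative (u t - u t powr (p-1))) (at t within {0..x+1})"
      by (rule DERIV_subset[OF ddu[OF t'] sub])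
    show "((\<lambda>x. phi p (x + c)) has_real_derivative dphi p (t + c)) (at t within {0..x+1})"
      by (rule phi_shift_deriv(1)[OF p])
    show "((\<lambda>x. dphi p (x + c)) has_real_derivative (phi p (t + c) - phi p (t + c) powr (p-1))) (at t within {0..x+1})"
      by (rule phi_shift_deriv(2)[OF p])
    show "u t > 0" by (rule pos[OF t'])
    show "phi p (t + c) > 0" by (rule phi_pos[OF p])
  next
    show "u 0 = phi p (0 + c)" "du 0 = dphi p (0 + c)" using i0 by simp_all
    show "x \<in> {0..x+1}" using x by simp
  qed
  then show ?thesis by simp
qed

theorem lemma2p1:
  fixes p l :: real and H P L :: nat
    and uh duh uc duc :: "nat \<Rightarrow> real \<Rightarrow> real"
  assumes "p > 2" and "l > 0" and "H \<ge> 1" and "P + L \<ge> 1"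
    and "bound_state p l H P L uh duh uc duc"
    and "positive_state l H P L uh uc"
    and "core_symmetric l P L uc"
  shows "\<exists>y>0.
     (\<forall>i<H. (\<forall>x\<ge>0. uh i x = phi p (x + y)) \<or> (\<forall>x\<ge>0. uh i x = phi p (x - y))) \<and>
     (let Hp = card {i. i < H \<and> (\<forall>x\<ge>0. uh i x = phi p (x + y))};
          Hm = card {i. i < H \<and> (\<forall>x\<ge>0. uh i x = phi p (x - y))};
          \<theta> = (real Hp - real Hm) / real (P + 2 * L);
          z = phi p y
      in z \<in> {0<..<(p / 2) powr (1 / (p - 2))} \<and>
         (\<forall>k<P + 2 * L.
            (\<forall>x\<in>{0..l}. (duc k has_real_derivative (uc k x - uc k x powr (p - 1))) (at x within {0..l})) \<and>
            uc k 0 = z \<and>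
            duc k 0 = \<theta> * sqrt (2 * fpot p z) \<and>
            duc k l = 0 \<and>
            (\<forall>x\<in>{0..l}. - (1 / 2) * (duc k x)\<^sup>2 + fpot p (uc k x) = (1 - \<theta>\<^sup>2) * fpot p z)))"
proof -
  have p: "p > 2" and l: "l > 0" and H1: "H \<ge> 1" and PL: "P + L \<ge> 1" using assms(1-4) by auto
  define N where "N = P + 2 * L"
  have N0: "N \<ge> 1" using PL by (simp add: N_def)
  note B = assms(5)[unfolded bound_state_def]
  note BH = B[THEN conjunct1]
  note BI = B[THEN conjunct2, THEN conjunct1]
  note BC = B[THEN conjunct2, THEN conjunct2, THEN conjunct1]
  note C1 = B[THEN conjunct2, THEN conjunct2, THEN conjunct2, THEN conjunct1]
  note C2 = B[THEN conjunct2, THEN conjunct2, THEN conjunct2, THEN conjunct2, THEN conjunct1]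
  note Kf = B[THEN conjunct2, THEN conjunct2, THEN conjunct2, THEN conjunct2, THEN conjunct2, THEN conjunct2, THEN conjunct1]
  note PE = B[THEN conjunct2, THEN conjunct2, THEN conjunct2, THEN conjunct2, THEN conjunct2, THEN conjunct2, THEN conjunct2, THEN conjunct1]
  note LO = B[THEN conjunct2, THEN conjunct2, THEN conjunct2, THEN conjunct2, THEN conjunct2, THEN conjunct2, THEN conjunct2, THEN conjunct2, THEN conjunct1]
  note PH = assms(6)[unfolded positive_state_def, THEN conjunct1]
  note PC = assms(6)[unfolded positive_state_def, THEN conjunct2]
  note CS = assms(7)[unfolded core_symmetric_def]
  have posH: "\<And>i x. i < H \<Longrightarrow> x \<in> {0..} \<Longrightarrow> uh i x > 0" using PH by auto
  have dH: "\<And>i x. i < H \<Longrightarrow> x \<in> {0..} \<Longrightarrow> (uh i has_real_derivative duh i x) (at x within {0..})"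
    using BH by auto
  have ddH: "\<And>i x. i < H \<Longrightarrow> x \<in> {0..} \<Longrightarrow> (duh i has_real_derivative (uh i x - uh i x powr (p-1))) (at x within {0..})"
    using BH posH abs_powr_conv by fastforce
  have posC: "\<And>j x. j < N \<Longrightarrow> x \<in> {0..l} \<Longrightarrow> uc j x > 0" using PC N_def by auto
  have dC: "\<And>j x. j < N \<Longrightarrow> x \<in> {0..l} \<Longrightarrow> (uc j has_real_derivative duc j x) (at x within {0..l})"
    using BC N_def by auto
  have ddC: "\<And>j x. j < N \<Longrightarrow> x \<in> {0..l} \<Longrightarrow> (duc j has_real_derivative (uc j x - uc j x powr (p-1))) (at x within {0..l})"
    using BC posC abs_powr_conv N_def by fastforce
  define z where "z = uh 0 0"
  have H0: "0 < H" using H1 by simp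
  have zH: "uh i 0 = z" if i: "i < H" for i
    unfolding z_def using C2[rule_format, OF i H0] .
  have zC: "uc j 0 = z" if j: "j < N" for j
  proof -
    have j': "j < P + 2 * L" using j N_def by simp
    show ?thesis unfolding z_def using C1[rule_format, OF H0 j'] by simp
  qed
  have z0: "z > 0" unfolding z_def by (rule posH[OF H0]) simp
  have EH: "(duh i 0)^2 = 2 * fpot p z" if i: "i < H" for i
  proof -
    have "- (1/2) * (duh i 0)^2 + fpot p (uh i 0) = 0"
      by (rule halfline_energy_zero[OF p dH[OF i] ddH[OF i] posH[OF i]]) (use BI i in auto)
    then show ?thesis using zH[OF i] by simp
  qed
  have f0: "fpot p z \<ge> 0" proof -
    have "(duh 0 0)^2 = 2 * fpot p z" using EH H1 by simp
    moreover have "(duh 0 0)^2 \<ge> 0" by simp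
    ultimately show ?thesis by simp
  qed
  have zle: "z \<le> phi p 0" by (rule fpot_le_max[OF p z0 f0])
  have dCeq: "duc j x = duc 0 x" if j: "j < N" and x: "x \<in> {0..l}" for j x
  proof -
    have N0': "0 < N" using N0 by simp
    have j': "j < P + 2 * L" and z': "0 < P + 2 * L" using j N0 N_def by auto
    show ?thesis
      by (rule deriv_unique_Icc[OF l x _ dC[OF j x] dC[OF N0' x]]) (use CS[rule_format, OF j' z'] in blast)
  qed
  have dl: "duc 0 l = 0"
  proof (cases "P > 0")
    case True then show ?thesis using PE by auto
  next
    case False
    then have "L > 0" "P = 0" using PL by auto
    then have "- duc (P + 2 * 0) l - duc (P + 2 * 0 + 1) l = 0" using LO[rule_format, of 0] by blast
    then have "- duc 0 l - duc 1 l = 0" using \<open>P = 0\<close> by simp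
    moreover have "duc 1 l = duc 0 l" using dCeq[of 1 l] l \<open>L > 0\<close> \<open>P = 0\<close> N_def by simp
    ultimately show ?thesis by simp
  qed
  have sumC: "(\<Sum>j<N. duc j 0) = real N * duc 0 0"
  proof -
    have "(\<Sum>j<N. duc j 0) = (\<Sum>j<N. duc 0 0)"
    proof (rule sum.cong)
      fix j assume "j \<in> {..<N}"
      then show "duc j 0 = duc 0 0" by (intro dCeq) (use l in auto)
    qed simp
    then show ?thesis by simp
  qed
  have sumC': "(\<Sum>j<P + 2 * L. duc j 0) = real N * duc 0 0" using sumC unfolding N_def .
  have Kir: "(\<Sum>i<H. duh i 0) + real N * duc 0 0 = 0" using Kf sumC' by linarith
  have zlt: "z < phi p 0"
  proof (rule ccontr)
    assume "\<not> z < phi p 0"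
    then have zeq: "z = phi p 0" using zle by simp
    then have "fpot p z = 0" using phi_energy[OF p, of 0] dphi_0 by simp
    then have "\<And>i. i < H \<Longrightarrow> duh i 0 = 0" using EH by simp
    then have "(\<Sum>i<H. duh i 0) = 0" by simp
    then have d00: "duc 0 0 = 0" using Kir N0 by simp
    have "uc 0 l = phi p l \<and> duc 0 l = dphi p l"
    proof (rule ode_unique[OF p l, where v="phi p" and dv="dphi p"])
      fix t assume t: "t \<in> {0..l}"
      show "(uc 0 has_real_derivative duc 0 t) (at t within {0..l})" using dC[OF _ t] N0 by simp
      show "(duc 0 has_real_derivative (uc 0 t - uc 0 t powr (p-1))) (at t within {0..l})" using ddC[OF _ t] N0 by simp
      show "(phi p has_real_derivative dphi p t) (at t within {0..l})" by (rule phi_deriv[OF p])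
      show "(dphi p has_real_derivative (phi p t - phi p t powr (p-1))) (at t within {0..l})" by (rule dphi_deriv[OF p])
      show "uc 0 t > 0" using posC[OF _ t] N0 by simp
      show "phi p t > 0" by (rule phi_pos[OF p])
    next
      show "uc 0 0 = phi p 0" using zC[of 0] N0 zeq by simp
      show "duc 0 0 = dphi p 0" using d00 dphi_0 by simp
      show "l \<in> {0..l}" using l by simp
    qed
    then show False using dl dphi_neg[OF p l] by simp
  qed
  obtain y where y: "y > 0" "phi p y = z" using phi_surj[OF p z0 zlt] by blast
  define s where "s = sqrt (2 * fpot p z)"
  have fz: "fpot p z = 1/2 * (dphi p y)^2" using phi_energy[OF p, of y] y by simp
  have s_eq: "s = - dphi p y" unfolding s_def fz using dphi_neg[OF p y(1)] by simp
  have spos: "s > 0" using s_eq dphi_neg[OF p y(1)] by simp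
  have s2: "s^2 = 2 * fpot p z" unfolding s_def using f0 by simp
  have dH0: "duh i 0 = s \<or> duh i 0 = - s" if i: "i < H" for i
  proof -
    have "(duh i 0)^2 = s^2" using EH[OF i] s2 by simp
    then show ?thesis by (simp only: power2_eq_iff)
  qed
  have plus: "\<forall>x\<ge>0. uh i x = phi p (x + y)" if i: "i < H" and d: "duh i 0 = - s" for i
  proof (intro allI impI)
    fix x :: real assume x: "x \<ge> 0"
    show "uh i x = phi p (x + y)"
      by (rule halfline_ident[OF p dH[OF i] ddH[OF i] posH[OF i] _ _ x]) (use zH[OF i] y d s_eq in auto)
  qed
  have minus: "\<forall>x\<ge>0. uh i x = phi p (x - y)" if i: "i < H" and d: "duh i 0 = s" for i
  proof (intro allI impI)
    fix x :: real assume x: "x \<ge> 0"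
    have "uh i x = phi p (x + - y)"
      by (rule halfline_ident[OF p dH[OF i] ddH[OF i] posH[OF i] _ _ x]) (use zH[OF i] y d s_eq phi_even dphi_odd in auto)
    then show "uh i x = phi p (x - y)" by simp
  qed
  have notboth: "\<not> ((\<forall>x\<ge>0. uh i x = phi p (x + y)) \<and> (\<forall>x\<ge>0. uh i x = phi p (x - y)))" for i
  proof
    assume "(\<forall>x\<ge>0. uh i x = phi p (x + y)) \<and> (\<forall>x\<ge>0. uh i x = phi p (x - y))"
    then have "phi p (y + y) = phi p (y - y)" using y(1) by (metis less_imp_le)
    then show False using phi_lt0[OF p, of "y + y"] y(1) by simp
  qed
  define Sp where "Sp = {i. i < H \<and> duh i 0 = - s}"
  define Sm where "Sm = {i. i < H \<and> duh i 0 = s}"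
  have setp: "{i. i < H \<and> (\<forall>x\<ge>0. uh i x = phi p (x + y))} = Sp"
  proof (intro equalityI subsetI)
    fix i assume "i \<in> {i. i < H \<and> (\<forall>x\<ge>0. uh i x = phi p (x + y))}"
    then show "i \<in> Sp" unfolding Sp_def using dH0 minus notboth by blast
  next
    fix i assume "i \<in> Sp" then show "i \<in> {i. i < H \<and> (\<forall>x\<ge>0. uh i x = phi p (x + y))}"
      unfolding Sp_def using plus by blast
  qed
  have setm: "{i. i < H \<and> (\<forall>x\<ge>0. uh i x = phi p (x - y))} = Sm"
  proof (intro equalityI subsetI)
    fix i assume "i \<in> {i. i < H \<and> (\<forall>x\<ge>0. uh i x = phi p (x - y))}"
    then show "i \<in> Sm" unfolding Sm_def using dH0 plus notboth by blast
  next
    fix i assume "i \<in> Sm" then show "i \<in> {i. i < H \<and> (\<forall>x\<ge>0. uh i x = phi p (x - y))}"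
      unfolding Sm_def using minus by blast
  qed
  have sumH: "(\<Sum>i<H. duh i 0) = real (card Sp) * (- s) + real (card Sm) * s"
  proof -
    have "(\<Sum>i<H. duh i 0) = (\<Sum>i<H. if duh i 0 = - s then - s else s)"
      by (rule sum.cong) (use dH0 in auto)
    also have "\<dots> = (\<Sum>i\<in>{..<H} \<inter> {i. duh i 0 = - s}. - s) + (\<Sum>i\<in>{..<H} \<inter> - {i. duh i 0 = - s}. s)"
      by (rule sum.If_cases) simp
    also have "{..<H} \<inter> {i. duh i 0 = - s} = Sp" unfolding Sp_def by auto
    also have "{..<H} \<inter> - {i. duh i 0 = - s} = Sm" unfolding Sm_def using dH0 spos by force
    finally show ?thesis by simp
  qed
  define \<theta> where "\<theta> = (real (card Sp) - real (card Sm)) / real N"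
  have d00: "duc 0 0 = \<theta> * s"
  proof -
    have "real N * duc 0 0 = (real (card Sp) - real (card Sm)) * s" using Kir sumH by (simp add: algebra_simps)
    then show ?thesis unfolding \<theta>_def using N0 by (simp add: field_simps)
  qed
  show ?thesis
  proof (intro exI[of _ y] conjI)
    show "y > 0" by (rule y(1))
    show "\<forall>i<H. (\<forall>x\<ge>0. uh i x = phi p (x + y)) \<or> (\<forall>x\<ge>0. uh i x = phi p (x - y))"
      using dH0 plus minus by blast
    show "let Hp = card {i. i < H \<and> (\<forall>x\<ge>0. uh i x = phi p (x + y))};
          Hm = card {i. i < H \<and> (\<forall>x\<ge>0. uh i x = phi p (x - y))};
          \<theta> = (real Hp - real Hm) / real (P + 2 * L);
          z = phi p y
      in z \<in> {0<..<(p / 2) powr (1 / (p - 2))} \<and>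
         (\<forall>k<P + 2 * L.
            (\<forall>x\<in>{0..l}. (duc k has_real_derivative (uc k x - uc k x powr (p - 1))) (at x within {0..l})) \<and>
            uc k 0 = z \<and>
            duc k 0 = \<theta> * sqrt (2 * fpot p z) \<and>
            duc k l = 0 \<and>
            (\<forall>x\<in>{0..l}. - (1 / 2) * (duc k x)\<^sup>2 + fpot p (uc k x) = (1 - \<theta>\<^sup>2) * fpot p z))"
      unfolding Let_def setp setm y(2) N_def[symmetric] \<theta>_def[symmetric] s_def[symmetric]
    proof (intro conjI allI impI ballI)
      show "z \<in> {0<..<(p / 2) powr (1 / (p - 2))}" using z0 zlt phi_0[OF p] by simp
    next
      fix k x assume k: "k < N" and x: "x \<in> {0..l}"
      show "(duc k has_real_derivative (uc k x - uc k x powr (p - 1))) (at x within {0..l})"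
        by (rule ddC[OF k x])
    next
      fix k assume k: "k < N"
      show "uc k 0 = z" by (rule zC[OF k])
      show "duc k 0 = \<theta> * s" using dCeq[OF k, of 0] l d00 by simp
      show "duc k l = 0" using dCeq[OF k, of l] l dl by simp
    next
      fix k x assume k: "k < N" and x: "x \<in> {0..l}"
      have "- (1/2) * (duc k x)^2 + fpot p (uc k x) = - (1/2) * (duc k 0)^2 + fpot p (uc k 0)"
        by (rule energy_const[OF p convex_real_interval(5) _ dC[OF k] ddC[OF k] posC[OF k] x]) (use l in simp)
      also have "\<dots> = - (1/2) * (\<theta> * s)^2 + fpot p z" using dCeq[OF k, of 0] l d00 zC[OF k] by simp
      also have "\<dots> = (1 - \<theta>^2) * fpot p z" using s2 by (simp add: power_mult_distrib algebra_simps)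
      finally show "- (1 / 2) * (duc k x)\<^sup>2 + fpot p (uc k x) = (1 - \<theta>\<^sup>2) * fpot p z" .
    qed
  qed
qed

end
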